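(* Let $(X,\Gamma)$ be a metric tame dynamical system and let $M(X)$ be the compact convex set of Borel probability measures on $X$ with the weak$^*$ topology, on which $\Gamma$ acts by push-forward: $(\gamma\nu)(f)=\nu(f\circ\gamma)$ for $f\in C(X)$. Then for each $p\in E(X,\Gamma)$, the formula $p_*\nu(f)=\nu(f\circ p)$ ($\nu\in M(X)$, $f\in C(X)$) defines an element $p_*\in E(M(X),\Gamma)$ (here $f\circ p$ is Borel, of Baire class 1), and the map $p\mapsto p_*$ is both an isomorphism of dynamical systems and a semigroup isomorphism of $E(X,\Gamma)$ onto $E(M(X),\Gamma)$.
   Context: A dynamical system $(X,\Gamma)$ consists of a compact Hausdorff space $X$ and a topological group $\Gamma$ acting continuously on $X$; it is metric if $X$ is metrizable. The enveloping semigroup $E(X,\Gamma)$ is the closure in $X^X$ (pointwise topology) of the maps $x\mapsto\gamma x$, $\gamma\in\Gamma$; $\Gamma$ acts on it by left composition. A space $K$ is Fréchet if every point in the closure of a set $A$ is the limit of a sequence from $A$. $(X,\Gamma)$ is tame if $E(X,\Gamma)$ is separable and Fréchet. *)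

theory Defs
  imports "HOL-Probability.Probability"
begin

text \<open>Continuous action of a topological group (type class topological_group_add,
  written additively but not assumed commutative) on a space.\<close>
definition continuous_action :: "('g::topological_group_add \<Rightarrow> 'a::topological_space \<Rightarrow> 'a) \<Rightarrow> bool" where
  "continuous_action act \<longleftrightarrow>
     (\<forall>x. act 0 x = x) \<and> (\<forall>g h x. act (g + h) x = act g (act h x)) \<and>
     continuous_on UNIV (\<lambda>(g, x). act g x)"

text \<open>Enveloping semigroup: closure of the maps act g in X^X with the pointwise
  (product) topology, which is the standard topology instance on function types.\<close>
definition enveloping_semigroup :: "('g \<Rightarrow> 'a \<Rightarrow> 'a::topological_space) \<Rightarrow> ('a \<Rightarrow> 'a) set" where
  "enveloping_semigroup act = closure (range act)"

definition separable_set :: "'b::topological_space set \<Rightarrow> bool" where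
  "separable_set K \<longleftrightarrow> (\<exists>D. countable D \<and> D \<subseteq> K \<and> K \<subseteq> closure D)"

definition frechet_set :: "'b::topological_space set \<Rightarrow> bool" where
  "frechet_set K \<longleftrightarrow> (\<forall>A x. A \<subseteq> K \<longrightarrow> x \<in> K \<longrightarrow> x \<in> closure A \<longrightarrow>
       (\<exists>s::nat \<Rightarrow> 'b. (\<forall>n. s n \<in> A) \<and> s \<longlonglongrightarrow> x))"

definition tame :: "('g \<Rightarrow> 'a \<Rightarrow> 'a::topological_space) \<Rightarrow> bool" where
  "tame act \<longleftrightarrow> separable_set (enveloping_semigroup act) \<and> frechet_set (enveloping_semigroup act)"

definition prob_measures :: "'a::topological_space measure set" where
  "prob_measures = {\<mu>. prob_space \<mu> \<and> sets \<mu> = sets (borel :: 'a measure)}"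

definition weak_star :: "'a::topological_space measure topology" where
  "weak_star = topology_generated_by
     {{\<mu> \<in> prob_measures. (\<integral>x. f x \<partial>\<mu>) \<in> U} | f U. continuous_on UNIV (f :: 'a \<Rightarrow> real) \<and> open U}"

definition push_action :: "('g \<Rightarrow> 'a \<Rightarrow> 'a::topological_space) \<Rightarrow> 'g \<Rightarrow> 'a measure \<Rightarrow> 'a measure" where
  "push_action act g = restrict (\<lambda>\<nu>. distr \<nu> borel (act g)) prob_measures"

definition measure_maps_top :: "('a::topological_space measure \<Rightarrow> 'a measure) topology" where
  "measure_maps_top = product_topology (\<lambda>_. weak_star) prob_measures"

definition enveloping_semigroup_M :: "('g \<Rightarrow> 'a \<Rightarrow> 'a::topological_space) \<Rightarrow> ('a measure \<Rightarrow> 'a measure) set" where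
  "enveloping_semigroup_M act = measure_maps_top closure_of (range (push_action act))"

definition pstar :: "('a \<Rightarrow> 'a::topological_space) \<Rightarrow> 'a measure \<Rightarrow> 'a measure" where
  "pstar p = restrict (\<lambda>\<nu>. distr \<nu> borel p) prob_measures"

end

theory Submission imports Defs begin


lemma fun_tendsto_pointwise:
  fixes s :: "nat \<Rightarrow> 'a \<Rightarrow> 'b::topological_space"
  assumes "s \<longlonglongrightarrow> p"
  shows "(\<lambda>n. s n x) \<longlonglongrightarrow> p x"
proof -
  have "limitin euclidean s p sequentially" using assms by simp
  then have "limitin (product_topology (\<lambda>i. euclidean) UNIV) s p sequentially"
    by (simp add: euclidean_product_topology)
  then show ?thesis by (simp add: limitin_componentwise)
qed

lemma continuous_map_generated:
  assumes "g ` topspace X \<subseteq> \<Union>S"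
    and "\<And>U. U \<in> S \<Longrightarrow> openin X {x \<in> topspace X. g x \<in> U}"
  shows "continuous_map X (topology_generated_by S) g"
  unfolding continuous_map_def
proof (intro conjI allI impI)
  show "g \<in> topspace X \<rightarrow> topspace (topology_generated_by S)" using assms(1) by auto
  fix U assume "openin (topology_generated_by S) U"
  then have "generate_topology_on S U" by (rule openin_topology_generated_by)
  then show "openin X {x \<in> topspace X. g x \<in> U}"
  proof induct
    case Empty then show ?case by simp
  next
    case (Int a b)
    have "{x \<in> topspace X. g x \<in> a \<inter> b} = {x \<in> topspace X. g x \<in> a} \<inter> {x \<in> topspace X. g x \<in> b}" by auto
    then show ?case using Int by auto
  next
    case (UN K)
    have "{x \<in> topspace X. g x \<in> \<Union>K} = (\<Union>k\<in>K. {x \<in> topspace X. g x \<in> k})" by auto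
    then show ?case using UN by auto
  next
    case (Basis s) then show ?case using assms(2) by auto
  qed
qed

lemma topspace_weak_star: "topspace (weak_star :: 'a::topological_space measure topology) = prob_measures"
proof -
  have "(\<Union>{{\<mu> \<in> prob_measures. (\<integral>x. f x \<partial>\<mu>) \<in> U} | f U. continuous_on UNIV (f :: 'a \<Rightarrow> real) \<and> open U}) = prob_measures"
  proof
    show "prob_measures \<subseteq> \<Union>{{\<mu> \<in> prob_measures. (\<integral>x. f x \<partial>\<mu>) \<in> U} | f U. continuous_on UNIV (f :: 'a \<Rightarrow> real) \<and> open U}"
    proof
      fix \<mu> assume "\<mu> \<in> (prob_measures::'a measure set)"
      then show "\<mu> \<in> \<Union>{{\<mu> \<in> prob_measures. (\<integral>x. f x \<partial>\<mu>) \<in> U} | f U. continuous_on UNIV (f :: 'a \<Rightarrow> real) \<and> open U}"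
        by (intro UnionI[where X="{\<mu> \<in> prob_measures. (\<integral>x. (\<lambda>_. 0::real) x \<partial>\<mu>) \<in> UNIV}"]) auto
    qed
  qed auto
  then show ?thesis unfolding weak_star_def by simp
qed

lemma int_conv:
  fixes s :: "nat \<Rightarrow> 'a::metric_space \<Rightarrow> 'a" and f :: "'a \<Rightarrow> real"
  assumes cpt: "compact (UNIV :: 'a set)" and f: "continuous_on UNIV f"
    and nu: "\<nu> \<in> prob_measures"
    and sm: "\<And>n. s n \<in> borel_measurable borel" and pm: "p \<in> borel_measurable borel"
    and lim: "\<And>x. (\<lambda>n. s n x) \<longlonglongrightarrow> p x"
  shows "(\<lambda>n. \<integral>x. f (s n x) \<partial>\<nu>) \<longlonglongrightarrow> (\<integral>x. f (p x) \<partial>\<nu>)"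
proof -
  have ps: "prob_space \<nu>" and sets: "sets \<nu> = sets borel" using nu by (auto simp: prob_measures_def)
  have "bounded (f ` UNIV)" using compact_continuous_image[OF f cpt] compact_imp_bounded by blast
  then obtain B where B: "\<And>x. norm (f x) \<le> B" by (auto simp: bounded_iff)
  have fm: "f \<in> borel_measurable borel" using f by (rule borel_measurable_continuous_onI)
  have mc: "\<And>g. g \<in> borel_measurable borel \<Longrightarrow> (\<lambda>x. f (g x)) \<in> borel_measurable \<nu>"
    by (subst measurable_cong_sets[OF sets refl]) (rule measurable_compose[OF _ fm])
  show ?thesis
  proof (rule integral_dominated_convergence[where w="\<lambda>_. B"])
    show "(\<lambda>x. f (p x)) \<in> borel_measurable \<nu>" by (rule mc[OF pm])
    show "(\<lambda>x. f (s i x)) \<in> borel_measurable \<nu>" for i by (rule mc[OF sm])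
    show "integrable \<nu> (\<lambda>_. B)"
      using ps by (simp add: prob_space.finite_measure finite_measure.integrable_const)
    show "AE x in \<nu>. (\<lambda>i. f (s i x)) \<longlonglongrightarrow> f (p x)"
      using f lim by (auto intro!: isCont_tendsto_compose[where g=f] simp: continuous_on_eq_continuous_at)
    show "AE x in \<nu>. norm (f (s i x)) \<le> B" for i using B by auto
  qed
qed



lemma measure_closed_eq:
  fixes M N :: "'a::metric_space measure"
  assumes M: "M \<in> prob_measures" and N: "N \<in> prob_measures"
    and eq: "\<And>f::'a \<Rightarrow> real. continuous_on UNIV f \<Longrightarrow> (\<integral>x. f x \<partial>M) = (\<integral>x. f x \<partial>N)"
    and F: "closed F"
  shows "measure M F = measure N F"
proof (cases "F = {}")
  case True then show ?thesis by simp
next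
  case False
  define fn where "fn n x = max 0 (1 - real n * infdist x F)" for n x
  have cont: "continuous_on UNIV (fn n)" for n
    unfolding fn_def by (intro continuous_intros)
  have lim: "(\<lambda>n. fn n x) \<longlonglongrightarrow> indicator F x" for x
  proof (cases "x \<in> F")
    case True
    then have "fn n x = 1" for n by (simp add: fn_def)
    then show ?thesis using True by simp
  next
    case xF: False
    have d: "infdist x F > 0" using in_closed_iff_infdist_zero[OF F False] xF
      by (metis infdist_nonneg order_less_le)
    obtain n0 :: nat where "real n0 > 1 / infdist x F" using reals_Archimedean2 by blast
    then have "\<forall>n\<ge>n0. fn n x = 0"
    proof (intro allI impI)
      fix n assume "real n0 > 1 / infdist x F" "n \<ge> n0"
      then have "real n > 1 / infdist x F" by (meson of_nat_le_iff order_less_le_trans)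
      then have "real n * infdist x F > 1" using d by (simp add: field_simps)
      then show "fn n x = 0" by (simp add: fn_def)
    qed
    then have "eventually (\<lambda>n. fn n x = 0) sequentially" by (auto simp: eventually_sequentially)
    then have "(\<lambda>n. fn n x) \<longlonglongrightarrow> 0" by (rule tendsto_eventually)
    then show ?thesis using xF by simp
  qed
  have bnd: "norm (fn n x) \<le> 1" for n x
    unfolding fn_def by (auto simp: infdist_nonneg)
  have conv: "(\<lambda>n. \<integral>x. fn n x \<partial>K) \<longlonglongrightarrow> measure K F" if K: "K \<in> prob_measures" for K
  proof -
    have ps: "prob_space K" and sets: "sets K = sets borel" using K by (auto simp: prob_measures_def)
    have Fs: "F \<in> sets K" using sets F by simp
    have "(\<lambda>n. \<integral>x. fn n x \<partial>K) \<longlonglongrightarrow> (\<integral>x. indicator F x \<partial>K)"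
    proof (rule integral_dominated_convergence[where w="\<lambda>_. 1"])
      show "(indicator F :: 'a \<Rightarrow> real) \<in> borel_measurable K" using Fs by simp
      show "fn i \<in> borel_measurable K" for i
        by (subst measurable_cong_sets[OF sets refl]) (rule borel_measurable_continuous_onI[OF cont])
      show "integrable K (\<lambda>_. 1::real)"
        using ps by (simp add: prob_space.finite_measure finite_measure.integrable_const)
      show "AE x in K. (\<lambda>i. fn i x) \<longlonglongrightarrow> indicator F x" using lim by auto
      show "AE x in K. norm (fn i x) \<le> 1" for i using bnd by auto
    qed
    moreover have "(\<integral>x. indicator F x \<partial>K) = measure K F"
      using ps Fs by (simp add: prob_space.finite_measure finite_measure.emeasure_finite)
    ultimately show ?thesis by simp
  qed
  have "(\<lambda>n. \<integral>x. fn n x \<partial>M) = (\<lambda>n. \<integral>x. fn n x \<partial>N)" using eq cont by auto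
  then show ?thesis using conv[OF M] conv[OF N] LIMSEQ_unique by metis
qed

lemma measure_uniq:
  fixes M N :: "'a::metric_space measure"
  assumes M: "M \<in> prob_measures" and N: "N \<in> prob_measures"
    and eq: "\<And>f::'a \<Rightarrow> real. continuous_on UNIV f \<Longrightarrow> (\<integral>x. f x \<partial>M) = (\<integral>x. f x \<partial>N)"
  shows "M = N"
proof -
  have psM: "prob_space M" and setsM: "sets M = sets borel" using M by (auto simp: prob_measures_def)
  have psN: "prob_space N" and setsN: "sets N = sets borel" using N by (auto simp: prob_measures_def)
  have sb: "sets (borel::'a measure) = sigma_sets UNIV (Collect closed)"
    by (subst borel_eq_closed) (simp add: sets_measure_of)
  show ?thesis
  proof (rule measure_eqI_generator_eq[where E="Collect closed" and \<Omega>=UNIV and A="\<lambda>_. UNIV"])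
    show "Int_stable (Collect closed)" by (auto simp: Int_stable_def)
    show "Collect closed \<subseteq> Pow UNIV" by auto
    fix X :: "'a set" assume "X \<in> Collect closed"
    then have "measure M X = measure N X" using measure_closed_eq[OF M N eq] by auto
    then show "emeasure M X = emeasure N X"
      using psM psN by (simp add: prob_space.finite_measure finite_measure.emeasure_eq_measure)
  next
    show "sets M = sigma_sets UNIV (Collect closed)" using setsM sb by simp
    show "sets N = sigma_sets UNIV (Collect closed)" using setsN sb by simp
    show "range (\<lambda>_. UNIV) \<subseteq> Collect closed" by auto
    show "(\<Union>i. UNIV) = (UNIV::'a set)" by simp
    show "emeasure M UNIV \<noteq> \<infinity>" for i::nat using psM by (simp add: prob_space.finite_measure finite_measure.emeasure_eq_measure)
  qed
qed

lemma hausdorff_weak_star: "Hausdorff_space (weak_star :: 'a::metric_space measure topology)"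
  unfolding Hausdorff_space_def topspace_weak_star
proof (intro allI impI, elim conjE)
  fix \<mu> \<nu> :: "'a measure"
  assume mu: "\<mu> \<in> prob_measures" and nu: "\<nu> \<in> prob_measures" and ne: "\<mu> \<noteq> \<nu>"
  then obtain f :: "'a \<Rightarrow> real" where f: "continuous_on UNIV f" and d: "(\<integral>x. f x \<partial>\<mu>) \<noteq> (\<integral>x. f x \<partial>\<nu>)"
    using measure_uniq by blast
  define a where "a = (\<integral>x. f x \<partial>\<mu>)"
  define b where "b = (\<integral>x. f x \<partial>\<nu>)"
  define r where "r = dist a b / 2"
  have r: "r > 0" using d by (simp add: a_def b_def r_def)
  let ?U = "{\<rho> \<in> prob_measures. (\<integral>x. f x \<partial>\<rho>) \<in> ball a r}"
  let ?V = "{\<rho> \<in> prob_measures. (\<integral>x. f x \<partial>\<rho>) \<in> ball b r}"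
  have oU: "openin weak_star ?U" unfolding weak_star_def
    by (rule topology_generated_by_Basis) (use f in blast)
  have oV: "openin weak_star ?V" unfolding weak_star_def
    by (rule topology_generated_by_Basis) (use f in blast)
  have "disjnt (ball a r) (ball b r)"
  proof -
    have "False" if "y \<in> ball a r" "y \<in> ball b r" for y
    proof -
      have "dist a b \<le> dist a y + dist y b" by (rule dist_triangle)
      also have "\<dots> < 2 * r" using that by (simp add: dist_commute)
      finally show False by (simp add: r_def)
    qed
    then show ?thesis by (auto simp: disjnt_def)
  qed
  then have "disjnt ?U ?V" by (auto simp: disjnt_def)
  moreover have "\<mu> \<in> ?U" "\<nu> \<in> ?V" using mu nu r by (auto simp: a_def b_def)
  ultimately show "\<exists>U V. openin weak_star U \<and> openin weak_star V \<and> \<mu> \<in> U \<and> \<nu> \<in> V \<and> disjnt U V"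
    using oU oV by blast
qed



theorem mainTheorem2:
  fixes act :: "'g::topological_group_add \<Rightarrow> 'a::metric_space \<Rightarrow> 'a"
  assumes "compact (UNIV :: 'a set)"
    and "continuous_action act"
    and "tame act"
  shows "(\<forall>p \<in> enveloping_semigroup act. p \<in> borel_measurable borel)
     \<and> (\<forall>p \<in> enveloping_semigroup act. \<forall>\<nu> \<in> prob_measures. \<forall>f :: 'a \<Rightarrow> real.
           continuous_on UNIV f \<longrightarrow> (\<integral>x. f x \<partial>(pstar p \<nu>)) = (\<integral>x. f (p x) \<partial>\<nu>))
     \<and> (\<forall>p \<in> enveloping_semigroup act. pstar p \<in> enveloping_semigroup_M act)
     \<and> bij_betw pstar (enveloping_semigroup act) (enveloping_semigroup_M act)
     \<and> homeomorphic_map (top_of_set (enveloping_semigroup act))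
         (subtopology measure_maps_top (enveloping_semigroup_M act)) pstar
     \<and> (\<forall>p \<in> enveloping_semigroup act. \<forall>g.
           pstar (act g \<circ> p) = restrict (push_action act g \<circ> pstar p) prob_measures)
     \<and> (\<forall>p \<in> enveloping_semigroup act. \<forall>q \<in> enveloping_semigroup act.
           pstar (p \<circ> q) = restrict (pstar p \<circ> pstar q) prob_measures)"
proof -
  note cpt = assms(1)
  define E where "E = enveloping_semigroup act"
  define EM where "EM = enveloping_semigroup_M act"
  have E_eq: "E = closure (range act)" by (simp add: E_def enveloping_semigroup_def)
  have closedE: "closed E" by (simp add: E_eq)
  have actE: "range act \<subseteq> E" by (simp add: E_eq closure_subset)
  have fr: "frechet_set E" using assms(3) by (simp add: tame_def E_def)
  have cont_act: "continuous_on UNIV (act g)" for g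
  proof -
    have c: "continuous_on UNIV (\<lambda>(g, x). act g x)" using assms(2) by (simp add: continuous_action_def)
    have "continuous_on UNIV (\<lambda>x. (\<lambda>(g, x). act g x) (g, x))"
      by (rule continuous_on_compose2[OF c]) (auto intro: continuous_on_Pair continuous_on_const continuous_on_id)
    then show ?thesis by simp
  qed
  have meas_act: "act g \<in> borel_measurable borel" for g
    by (rule borel_measurable_continuous_onI[OF cont_act])
  have seqE: "\<exists>s. (\<forall>n. s n \<in> A) \<and> (\<forall>x. (\<lambda>n. s n x) \<longlonglongrightarrow> p x)"
    if sub: "A \<subseteq> E" "p \<in> E" "p \<in> closure A" for A p
  proof -
    obtain s :: "nat \<Rightarrow> 'a \<Rightarrow> 'a" where "\<forall>n. s n \<in> A" "s \<longlonglongrightarrow> p"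
    proof -
      have "\<forall>A x. A \<subseteq> E \<longrightarrow> x \<in> E \<longrightarrow> x \<in> closure A \<longrightarrow>
       (\<exists>s::nat \<Rightarrow> 'a \<Rightarrow> 'a. (\<forall>n. s n \<in> A) \<and> s \<longlonglongrightarrow> x)"
        using fr unfolding frechet_set_def by simp
      then have "\<exists>s::nat \<Rightarrow> 'a \<Rightarrow> 'a. (\<forall>n. s n \<in> A) \<and> s \<longlonglongrightarrow> p"
        using sub by blast
      then show ?thesis using that by blast
    qed
    then show ?thesis using fun_tendsto_pointwise by metis
  qed
  have measE: "p \<in> borel_measurable borel" if pE: "p \<in> E" for p
  proof -
    have "p \<in> closure (range act)" using pE E_eq by simp
    then obtain s where s: "\<forall>n. s n \<in> range act" "\<forall>x. (\<lambda>n. s n x) \<longlonglongrightarrow> p x"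
      using seqE[OF actE pE] by meson
    have "s n \<in> borel_measurable borel" for n using s(1) meas_act by (metis rangeE)
    then show ?thesis by (rule borel_measurable_LIMSEQ_metric[where f=s]) (use s(2) in blast)
  qed
  have pstar_eq: "pstar p \<nu> = distr \<nu> borel p" if "\<nu> \<in> prob_measures" for p \<nu>
    using that by (simp add: pstar_def)
  have measN: "p \<in> measurable \<nu> borel" if "\<nu> \<in> prob_measures" "p \<in> borel_measurable borel" for p \<nu>
  proof -
    have sn: "sets \<nu> = sets borel" using that by (simp add: prob_measures_def)
    show ?thesis using that(2) by (subst measurable_cong_sets[OF sn refl])
  qed
  have intf: "(\<integral>x. f x \<partial>(pstar p \<nu>)) = (\<integral>x. f (p x) \<partial>\<nu>)"
    if "p \<in> borel_measurable borel" "\<nu> \<in> prob_measures" "continuous_on UNIV f" for p \<nu> and f :: "'a \<Rightarrow> real"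
    using that(2) integral_distr[OF measN[OF that(2,1)] borel_measurable_continuous_onI[OF that(3)]]
    by (simp add: pstar_eq)
  have inPM: "pstar p \<nu> \<in> prob_measures"
    if "p \<in> borel_measurable borel" "\<nu> \<in> prob_measures" for p \<nu>
  proof -
    have "prob_space \<nu>" using that by (simp add: prob_measures_def)
    then have "prob_space (distr \<nu> borel p)" using measN[OF that(2,1)] by (rule prob_space.prob_space_distr)
    then show ?thesis using that by (simp add: pstar_eq prob_measures_def)
  qed
  have hcont: "continuous_on E (\<lambda>p. \<integral>x. f (p x) \<partial>\<nu>)"
    if nu: "\<nu> \<in> prob_measures" and f: "continuous_on UNIV f" for \<nu> and f :: "'a \<Rightarrow> real"
  proof -
    let ?h = "\<lambda>p. \<integral>x. f (p x) \<partial>\<nu>"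
    have "closed (?h -` B \<inter> E)" if B: "closed B" for B
    proof -
      have "closure (?h -` B \<inter> E) \<subseteq> ?h -` B \<inter> E"
      proof
        fix q assume q: "q \<in> closure (?h -` B \<inter> E)"
        have qE: "q \<in> E" using q closedE closure_mono[of "?h -` B \<inter> E" E] closure_closed by blast
        obtain s where s: "\<forall>n. s n \<in> ?h -` B \<inter> E" "\<forall>x. (\<lambda>n. s n x) \<longlonglongrightarrow> q x"
          using seqE[OF _ qE q] by blast
        have "(\<lambda>n. ?h (s n)) \<longlonglongrightarrow> ?h q"
          using s by (intro int_conv[OF cpt f nu] measE qE) auto
        then have "?h q \<in> B" using s(1) B closed_sequentially[of B "\<lambda>n. ?h (s n)"] by auto
        then show "q \<in> ?h -` B \<inter> E" using qE by auto
      qed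
      then show ?thesis using closure_subset_eq by blast
    qed
    then show ?thesis using continuous_on_closed_vimage[OF closedE] by blast
  qed
  have subbasis_open: "openin (top_of_set E) {p \<in> topspace (top_of_set E). pstar p \<nu> \<in> U}"
    if nu: "\<nu> \<in> prob_measures"
      and U: "U \<in> {{\<mu> \<in> prob_measures. (\<integral>x. f x \<partial>\<mu>) \<in> U} | f U. continuous_on UNIV (f :: 'a \<Rightarrow> real) \<and> open U}"
    for \<nu> U
  proof -
    obtain f :: "'a \<Rightarrow> real" and V where f: "continuous_on UNIV f" "open V"
      and Ueq: "U = {\<mu> \<in> prob_measures. (\<integral>x. f x \<partial>\<mu>) \<in> V}" using U by blast
    have "{p \<in> topspace (top_of_set E). pstar p \<nu> \<in> U} = {p \<in> E. (\<integral>x. f (p x) \<partial>\<nu>) \<in> V}"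
      using measE inPM intf nu f(1) by (auto simp: Ueq)
    moreover have "{p \<in> E. (\<integral>x. f (p x) \<partial>\<nu>) \<in> V} = E \<inter> (\<lambda>p. \<integral>x. f (p x) \<partial>\<nu>) -` V" by blast
    ultimately show ?thesis using continuous_openin_preimage_gen[OF hcont[OF nu f(1)] f(2)] by simp
  qed
  have contP: "continuous_map (top_of_set E) measure_maps_top pstar"
    unfolding measure_maps_top_def continuous_map_componentwise
  proof (intro conjI ballI)
    show "pstar ` topspace (top_of_set E) \<subseteq> extensional prob_measures"
      by (auto simp: pstar_def)
    fix \<nu> :: "'a measure" assume nu: "\<nu> \<in> prob_measures"
    show "continuous_map (top_of_set E) weak_star (\<lambda>p. pstar p \<nu>)"
      unfolding weak_star_def
    proof (rule continuous_map_generated)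
      show "(\<lambda>p. pstar p \<nu>) ` topspace (top_of_set E) \<subseteq> \<Union>{{\<mu> \<in> prob_measures. (\<integral>x. f x \<partial>\<mu>) \<in> U} | f U. continuous_on UNIV (f :: 'a \<Rightarrow> real) \<and> open U}"
        using topspace_weak_star[where 'a='a] inPM measE nu unfolding weak_star_def by auto
    qed (rule subbasis_open[OF nu])
  qed
  have hausM: "Hausdorff_space (measure_maps_top :: ('a measure \<Rightarrow> 'a measure) topology)"
    unfolding measure_maps_top_def Hausdorff_space_product_topology using hausdorff_weak_star by blast
  have cptfun: "compact (UNIV :: ('a \<Rightarrow> 'a) set)"
  proof -
    have "compact_space (euclidean :: 'a topology)" using cpt by (simp add: compact_space_def)
    then have "compact_space (product_topology (\<lambda>_. euclidean :: 'a topology) (UNIV :: 'a set))"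
      by (simp add: compact_space_product_topology)
    then show ?thesis by (simp add: euclidean_product_topology compact_space_def)
  qed
  have cptE: "compact E" using compact_Int_closed[OF cptfun closedE] by simp
  have cspE: "compact_space (top_of_set E)" using cptE by (simp add: compact_space_subtopology)
  have pstar_act: "pstar (act g) = push_action act g" for g
    by (simp add: pstar_def push_action_def)
  have img1: "pstar ` E \<subseteq> EM"
  proof -
    have "(top_of_set E) closure_of (range act) = E"
      using closure_of_subtopology_open[of euclidean E "range act"] actE
      using closure_of_subtopology_open[of euclidean E "range act"] actE
      by (simp add: euclidean_closure_of E_eq[symmetric])
    then have "pstar ` E \<subseteq> measure_maps_top closure_of (pstar ` range act)"
      using continuous_map_image_closure_subset[OF contP] by metis
    also have "pstar ` range act = range (push_action act)" using pstar_act by (auto simp: image_iff)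
    finally show ?thesis by (simp add: EM_def enveloping_semigroup_M_def)
  qed
  have img2: "EM \<subseteq> pstar ` E"
  proof -
    have "compactin (top_of_set E) E" using cptE by (simp add: compactin_subtopology)
    then have "compactin measure_maps_top (pstar ` E)" using image_compactin[OF _ contP] by blast
    then have cl: "closedin measure_maps_top (pstar ` E)" using compactin_imp_closedin[OF hausM] by blast
    have "pstar ` range act = range (push_action act)" using pstar_act by (auto simp: image_iff)
    then have "range (push_action act) \<subseteq> pstar ` E" using actE by (metis image_mono)
    then show ?thesis using closure_of_minimal[OF _ cl] by (simp add: EM_def enveloping_semigroup_M_def)
  qed
  have imgE: "pstar ` E = EM" using img1 img2 by blast
  have injP: "inj_on pstar E"
  proof
    fix p q assume p: "p \<in> E" and q: "q \<in> E" and eq: "pstar p = pstar q"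
    show "p = q"
    proof
      fix x :: 'a
      let ?d = "return borel x"
      have d: "?d \<in> prob_measures" by (simp add: prob_measures_def prob_space_return)
      have "return borel (p x) = return borel (q x)"
      proof -
        have "pstar p ?d = return borel (p x)" "pstar q ?d = return borel (q x)"
          using distr_return[OF measE[OF p], of x] distr_return[OF measE[OF q], of x]
          by (simp_all add: pstar_eq[OF d])
        then show ?thesis using eq by simp
      qed
      then have "emeasure (return borel (p x)) {p x} = emeasure (return borel (q x)) {p x}" by simp
      then show "p x = q x" by (simp add: indicator_def split: if_splits)
    qed
  qed
  have EMsub: "EM \<subseteq> topspace measure_maps_top"
    by (simp add: EM_def enveloping_semigroup_M_def closure_of_subset_topspace)
  have homeo: "homeomorphic_map (top_of_set E) (subtopology measure_maps_top EM) pstar"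
  proof (rule bijective_closed_imp_homeomorphic_map)
    show cm: "continuous_map (top_of_set E) (subtopology measure_maps_top EM) pstar"
      using contP img1 by (intro continuous_map_into_subtopology) auto
    show "closed_map (top_of_set E) (subtopology measure_maps_top EM) pstar"
      by (rule continuous_imp_closed_map[OF cm cspE]) (simp add: Hausdorff_space_subtopology hausM)
    show "pstar ` topspace (top_of_set E) = topspace (subtopology measure_maps_top EM)"
      using imgE EMsub by auto
    show "inj_on pstar (topspace (top_of_set E))" using injP by simp
  qed
  have equiv: "pstar (act g \<circ> p) = restrict (push_action act g \<circ> pstar p) prob_measures"
    if p: "p \<in> E" for p g
  proof
    fix \<nu> :: "'a measure"
    show "pstar (act g \<circ> p) \<nu> = restrict (push_action act g \<circ> pstar p) prob_measures \<nu>"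
    proof (cases "\<nu> \<in> prob_measures")
      case True
      have "distr \<nu> borel (act g \<circ> p) = distr (distr \<nu> borel p) borel (act g)"
        using measN[OF True measE[OF p]] meas_act by (simp add: distr_distr)
      then show ?thesis using True inPM[OF measE[OF p] True]
        by (simp add: pstar_def push_action_def)
    qed (simp add: pstar_def)
  qed
  have semi: "pstar (p \<circ> q) = restrict (pstar p \<circ> pstar q) prob_measures"
    if p: "p \<in> E" and q: "q \<in> E" for p q
  proof
    fix \<nu> :: "'a measure"
    show "pstar (p \<circ> q) \<nu> = restrict (pstar p \<circ> pstar q) prob_measures \<nu>"
    proof (cases "\<nu> \<in> prob_measures")
      case True
      have "distr \<nu> borel (p \<circ> q) = distr (distr \<nu> borel q) borel p"
        using measN[OF True measE[OF q]] measE[OF p] by (simp add: distr_distr)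
      then show ?thesis using True inPM[OF measE[OF q] True]
        by (simp add: pstar_def)
    qed (simp add: pstar_def)
  qed
  show ?thesis
  proof -
    have "bij_betw pstar E EM" using injP imgE by (simp add: bij_betw_def)
    moreover have "\<forall>p\<in>E. pstar p \<in> EM" using img1 by blast
    moreover have "\<forall>p \<in> E. \<forall>\<nu> \<in> prob_measures. \<forall>f :: 'a \<Rightarrow> real.
           continuous_on UNIV f \<longrightarrow> (\<integral>x. f x \<partial>(pstar p \<nu>)) = (\<integral>x. f (p x) \<partial>\<nu>)"
      using intf measE by blast
    ultimately show ?thesis using measE homeo equiv semi
      unfolding E_def[symmetric] EM_def[symmetric] by blast
  qed
qed

end
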